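(* Let $n\ge2$, $N,M\ge1$, let $\Lambda$ be a positive definite diagonal $n\times n$ matrix, let $\overline Q^1_0,\dots,\overline Q^M_0\in SO(n)$, and let $\phi:\mathbb{R}^{n\times n}\to[0,\infty)$ be smooth. Consider the problem of minimizing $$\hat V(U_0,\dots,U_{N-1})=\sum_{k=0}^{N-1}\operatorname{trace}(\Lambda U_k)+\sum_{a=1}^M\phi(Q^a_N)$$ over $U_0,\dots,U_{N-1}\in SO(n)$, where $Q^a_0=\overline Q^a_0$ and $Q^a_{k+1}=Q^a_kU_k$ for $k=0,\dots,N-1$, $a=1,\dots,M$. If $(U_0,\dots,U_{N-1})$ is a (local) minimizer, then there exist real $n\times n$ matrices $P^a_k$ ($a=1,\dots,M$, $k=0,\dots,N$) such that for all $a$ and $k=0,\dots,N-1$: $$Q^a_{k+1}=Q^a_kU_k,\qquad P^a_{k+1}=P^a_kU_k,\qquad U_k\Lambda-\Lambda U_k^T=\sum_{a=1}^M\big((Q^a_k)^TP^a_k-(P^a_k)^TQ^a_k\big),$$ and $P^a_N=\nabla\phi(Q^a_N)$ for all $a$.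
   Context: $SO(n)$ is the group of real orthogonal $n\times n$ matrices of determinant $1$; $A^T$ is the transpose. $\nabla\phi(A)$ is the Euclidean (Frobenius) gradient of $\phi$ at $A\in\mathbb{R}^{n\times n}$, i.e. the matrix with entries $\partial\phi/\partial A_{ij}$, so that $\frac{d}{d\epsilon}\big|_{0}\phi(A+\epsilon B)=\operatorname{trace}(\nabla\phi(A)^TB)$. *)

theory Defs
  imports "HOL-Analysis.Analysis"
begin

fun iter_pderiv :: "'a::euclidean_space list \<Rightarrow> ('a \<Rightarrow> real) \<Rightarrow> 'a \<Rightarrow> real" where
  "iter_pderiv [] f = f"
| "iter_pderiv (v # vs) f = (\<lambda>x. deriv (\<lambda>t. iter_pderiv vs f (x + t *\<^sub>R v)) 0)"

definition smooth_fun :: "('a::euclidean_space \<Rightarrow> real) \<Rightarrow> bool" where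
  "smooth_fun f \<longleftrightarrow> (\<forall>vs \<in> lists Basis. \<forall>x. iter_pderiv vs f differentiable (at x))"

text \<open>Euclidean (Frobenius) gradient: entry (i,j) is the partial derivative
  of phi with respect to the (i,j) entry.\<close>
definition grad_mat :: "(real^'n^'n \<Rightarrow> real) \<Rightarrow> real^'n^'n \<Rightarrow> real^'n^'n" where
  "grad_mat phi A = (\<chi> i j. frechet_derivative phi (at A) (axis i (axis j 1)))"

fun traj :: "(nat \<Rightarrow> real^'n^'n) \<Rightarrow> (nat \<Rightarrow> real^'n^'n) \<Rightarrow> nat \<Rightarrow> nat \<Rightarrow> real^'n^'n" where
  "traj Qbar U a 0 = Qbar a"
| "traj Qbar U a (Suc k) = traj Qbar U a k ** U k"

definition cost :: "nat \<Rightarrow> nat \<Rightarrow> real^'n^'n \<Rightarrow> (nat \<Rightarrow> real^'n^'n) \<Rightarrow> (real^'n^'n \<Rightarrow> real)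
    \<Rightarrow> (nat \<Rightarrow> real^'n^'n) \<Rightarrow> real" where
  "cost N M Lam Qbar phi U =
     (\<Sum>k<N. trace (Lam ** U k)) + (\<Sum>a\<in>{1..M}. phi (traj Qbar U a N))"

end

theory Submission
  imports Defs
begin


lemma sum_single_UNIV: "(\<And>r. r \<noteq> b \<Longrightarrow> f r = 0) \<Longrightarrow> (\<Sum>r\<in>(UNIV::'n::finite set). f r) = (f b::real)"
  by (subst sum.remove[of UNIV b]) (auto intro!: sum.neutral)

lemma mm_nth: "(A ** B) $ p $ q = (\<Sum>r\<in>UNIV. A $ p $ r * B $ r $ q)"
  by (simp add: matrix_matrix_mult_def)

lemma mm_add_r: "((A::real^'n^'m) + B) ** C = A ** C + B ** C"
  by (simp add: vec_eq_iff mm_nth ring_distribs sum.distrib)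
lemma mm_diff_r: "((A::real^'n^'m) - B) ** C = A ** C - B ** C"
  by (simp add: vec_eq_iff mm_nth ring_distribs sum_subtractf)
lemma mm_diff_l: "(C::real^'n^'m) ** (A - B) = C ** A - C ** B"
  by (simp add: vec_eq_iff mm_nth ring_distribs sum_subtractf)
lemma mm_scale_l: "((c::real) *\<^sub>R (A::real^'n^'m)) ** B = c *\<^sub>R (A ** B)"
  by (simp add: vec_eq_iff mm_nth sum_distrib_left mult.assoc)
lemma mm_scale_r: "(A::real^'n^'m) ** ((c::real) *\<^sub>R B) = c *\<^sub>R (A ** B)"
  by (simp add: vec_eq_iff mm_nth sum_distrib_left algebra_simps)
lemma mm_sum_r: "(\<Sum>b\<in>S. (F b::real^'n^'m)) ** C = (\<Sum>b\<in>S. F b ** C)"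
  by (induction S rule: infinite_finite_induct) (auto simp: mm_add_r)
lemma tr_add: "transpose ((A::real^'n^'m) + B) = transpose A + transpose B"
  by (simp add: vec_eq_iff transpose_def)
lemma tr_diff: "transpose ((A::real^'n^'m) - B) = transpose A - transpose B"
  by (simp add: vec_eq_iff transpose_def)
lemma tr_sum: "transpose (\<Sum>b\<in>S. (F b::real^'n^'m)) = (\<Sum>b\<in>S. transpose (F b))"
  by (induction S rule: infinite_finite_induct) (auto simp: tr_add vec_eq_iff transpose_def)
lemma trace_scale: "trace ((c::real) *\<^sub>R (A::real^'n^'n)) = c * trace A"
  by (simp add: trace_def sum_distrib_left)
lemma trace_sum: "trace (\<Sum>b\<in>S. (F b::real^'n^'n)) = (\<Sum>b\<in>S. trace (F b))"
  by (induction S rule: infinite_finite_induct) (auto simp: trace_add trace_0[simplified])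

definition E :: "'n \<Rightarrow> 'n \<Rightarrow> real^'n^'n" where "E a b = axis a (axis b 1)"
lemma E_nth: "E a b $ p $ q = (if p = a \<and> q = b then 1 else 0)"
  by (simp add: E_def axis_def)
lemma E_mul: "E a b ** E c d = (if b = c then E a d else 0)"
proof -
  have "(\<Sum>r\<in>UNIV. E a b $ p $ r * E c d $ r $ q) = E a b $ p $ b * E c d $ b $ q" for p q
    by (rule sum_single_UNIV) (simp add: E_nth)
  then show ?thesis unfolding vec_eq_iff mm_nth by (auto simp: E_nth)
qed
lemma E_tr: "transpose (E a b) = E b a"
  by (auto simp: vec_eq_iff transpose_def E_nth)
lemma trace_E: "trace (B ** E a b) = B $ b $ a"
proof -
  have "(\<Sum>r\<in>UNIV. B $ p $ r * E a b $ r $ p) = B $ p $ a * E a b $ a $ p" for p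
    by (rule sum_single_UNIV) (simp add: E_nth)
  moreover have "(\<Sum>p\<in>UNIV. B $ p $ a * E a b $ a $ p) = B $ b $ a * E a b $ a $ b"
    by (rule sum_single_UNIV) (simp add: E_nth)
  ultimately show ?thesis unfolding trace_def mm_nth by (simp add: E_nth)
qed

definition Gm :: "'n \<Rightarrow> 'n \<Rightarrow> real \<Rightarrow> real^'n^'n" where
  "Gm i j t = mat 1 + (cos t - 1) *\<^sub>R (E i i + E j j) + sin t *\<^sub>R (E j i - E i j)"

lemma Gm_nth: "Gm i j t $ p $ q = (if p = q then 1 else 0) + (cos t - 1) * ((if p = i \<and> q = i then 1 else 0) + (if p = j \<and> q = j then 1 else 0))
   + sin t * ((if p = j \<and> q = i then 1 else 0) - (if p = i \<and> q = j then 1 else 0))"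
  by (simp add: Gm_def mat_def E_nth)



lemma mat_eqI: "(\<And>p q. (A::real^'n^'m) $ p $ q = B $ p $ q) \<Longrightarrow> A = B" by (simp add: vec_eq_iff)

lemma mat_expand: "(M::real^'n^'n) = (\<Sum>p\<in>UNIV. \<Sum>q\<in>UNIV. M $ p $ q *\<^sub>R E p q)"
proof (rule mat_eqI)
  fix a b
  have "(\<Sum>p\<in>UNIV. \<Sum>q\<in>UNIV. M $ p $ q * E p q $ a $ b) = (\<Sum>q\<in>UNIV. M $ a $ q * E a q $ a $ b)"
    by (rule sum_single_UNIV) (simp add: E_nth)
  also have "\<dots> = M $ a $ b * E a b $ a $ b"
    by (rule sum_single_UNIV) (simp add: E_nth)
  finally show "M $ a $ b = (\<Sum>p\<in>UNIV. \<Sum>q\<in>UNIV. M $ p $ q *\<^sub>R E p q) $ a $ b"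
    by (simp add: E_nth)
qed

lemma deriv_trace:
  assumes "phi differentiable (at A)"
  shows "frechet_derivative phi (at A) M = trace (transpose (grad_mat phi A) ** M)"
proof -
  let ?L = "frechet_derivative phi (at A)"
  have lin: "linear ?L"
    using assms frechet_derivative_works has_derivative_linear by blast
  have "?L M = ?L (\<Sum>p\<in>UNIV. \<Sum>q\<in>UNIV. M $ p $ q *\<^sub>R E p q)"
    by (subst mat_expand) rule
  also have "\<dots> = (\<Sum>p\<in>UNIV. \<Sum>q\<in>UNIV. M $ p $ q * ?L (E p q))"
    by (simp add: linear_sum[OF lin] linear_scale[OF lin])
  also have "\<dots> = trace (transpose (grad_mat phi A) ** M)"
    apply (simp add: trace_def mm_nth transpose_def grad_mat_def E_def mult.commute)
    apply (rule sum.swap)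
    done
  finally show ?thesis .
qed

lemma Gm_double: assumes "i \<noteq> j" shows "Gm i j t ** Gm i j t = Gm i j (2*t)"
proof -
  have c: "cos (2*t) = cos t ^ 2 - sin t ^ 2" by (simp add: cos_double)
  have s: "sin (2*t) = 2 * sin t * cos t" by (simp add: sin_double)
  have p: "sin t ^ 2 + cos t ^ 2 = 1" by simp
  show ?thesis
  unfolding Gm_def
  apply (simp add: matrix_add_ldistrib mm_add_r mm_diff_r mm_diff_l mm_scale_l mm_scale_r E_mul assms assms[symmetric])
  apply (rule mat_eqI)
  subgoal for p q
    using assms c s p
    apply (cases "p = i"; cases "q = i"; cases "p = j"; cases "q = j")
    apply (simp_all add: E_nth mat_def algebra_simps power2_eq_square)
    done
  done
qed

lemma Gm_orth: assumes "i \<noteq> j" shows "transpose (Gm i j t) ** Gm i j t = mat 1"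
proof -
  have s: "sin t ^ 2 + cos t ^ 2 = 1" by simp
  show ?thesis
  unfolding Gm_def
  apply (simp add: tr_add tr_diff transpose_scalar E_tr matrix_add_ldistrib mm_add_r mm_diff_r mm_diff_l mm_scale_l mm_scale_r E_mul assms assms[symmetric])
  apply (rule mat_eqI)
  subgoal for p q
    using assms s
    apply (cases "p = i"; cases "q = i"; cases "p = j"; cases "q = j")
    apply (simp_all add: E_nth mat_def algebra_simps power2_eq_square)
    done
  done
qed

lemma Gm_rot: assumes "i \<noteq> j" shows "rotation_matrix (Gm i j t)"
proof -
  have o: "orthogonal_matrix (Gm i j s)" for s
    using Gm_orth[OF assms] orthogonal_matrix by blast
  have "Gm i j t = Gm i j (t/2) ** Gm i j (t/2)"
    using Gm_double[OF assms, of "t/2"] by simp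
  then have "det (Gm i j t) = det (Gm i j (t/2)) * det (Gm i j (t/2))"
    by (simp add: det_mul)
  moreover have "det (Gm i j (t/2)) = 1 \<or> det (Gm i j (t/2)) = -1"
    using det_orthogonal_matrix[OF o] .
  ultimately have "det (Gm i j t) = 1" by auto
  then show ?thesis using o rotation_matrix_def by blast
qed

lemma Gm_0: "Gm i j 0 = mat 1" by (simp add: Gm_def)


fun rprod :: "(nat \<Rightarrow> real^'n^'n) \<Rightarrow> nat \<Rightarrow> nat \<Rightarrow> real^'n^'n" where
  "rprod U k 0 = mat 1"
| "rprod U k (Suc m) = U k ** rprod U (Suc k) m"

lemma traj_add: "traj Qbar U a (k + m) = traj Qbar U a k ** rprod U k m"
proof (induction m arbitrary: k)
  case 0 show ?case by simp
next
  case (Suc m)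
  have "traj Qbar U a (k + Suc m) = traj Qbar U a (Suc k + m)" by simp
  also have "\<dots> = traj Qbar U a (Suc k) ** rprod U (Suc k) m" by (rule Suc.IH)
  also have "\<dots> = traj Qbar U a k ** rprod U k (Suc m)" by (simp add: matrix_mul_assoc)
  finally show ?case .
qed

lemma traj_cong: "(\<And>j. j < m \<Longrightarrow> V j = U j) \<Longrightarrow> traj Qbar V a m = traj Qbar U a m"
  by (induction m) auto

lemma rprod_cong: "(\<And>j. s \<le> j \<Longrightarrow> V j = U j) \<Longrightarrow> rprod V s m = rprod U s m"
  by (induction m arbitrary: s) auto

lemma trace_cong_sum:
  fixes k N :: nat and U :: "nat \<Rightarrow> real^'n^'n"
  assumes "k < N"
  shows "(\<Sum>j<N. trace (Lam ** (U(k := W)) j)) = (\<Sum>j<N. trace ((Lam::real^'n^'n) ** U j)) + (trace (Lam ** W) - trace (Lam ** U k))"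
proof -
  have r: "(\<Sum>j<N. f j) = f k + (\<Sum>j\<in>{..<N}-{k}. f j)" for f :: "nat \<Rightarrow> real"
    by (rule sum.remove) (use assms in auto)
  have "(\<Sum>j\<in>{..<N}-{k}. trace (Lam ** (U(k := W)) j)) = (\<Sum>j\<in>{..<N}-{k}. trace (Lam ** U j))"
    by (rule sum.cong) auto
  then show ?thesis using r[of "\<lambda>j. trace (Lam ** (U(k := W)) j)"] r[of "\<lambda>j. trace (Lam ** U j)"] by simp
qed


lemma tr_nth: "transpose (A::real^'n^'m) $ p $ q = A $ q $ p"
  by (simp add: transpose_def)

theorem theorem2p6:
  fixes N M :: nat
    and Lam :: "real^'n^'n"
    and Qbar U :: "nat \<Rightarrow> real^'n^'n"
    and phi :: "real^'n^'n \<Rightarrow> real"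
  assumes n2: "CARD('n) \<ge> 2"
    and N1: "N \<ge> 1" and M1: "M \<ge> 1"
    and Lam_diag: "\<forall>i j. i \<noteq> j \<longrightarrow> Lam $ i $ j = 0"
    and Lam_pos: "\<forall>i. Lam $ i $ i > 0"
    and Qbar_SO: "\<forall>a\<in>{1..M}. rotation_matrix (Qbar a)"
    and phi_nonneg: "\<forall>A. phi A \<ge> 0"
    and phi_smooth: "smooth_fun phi"
    and U_SO: "\<forall>k<N. rotation_matrix (U k)"
    and locmin: "\<exists>e>0. \<forall>V. (\<forall>k<N. rotation_matrix (V k) \<and> norm (V k - U k) < e)
                   \<longrightarrow> cost N M Lam Qbar phi U \<le> cost N M Lam Qbar phi V"
  shows "\<exists>P :: nat \<Rightarrow> nat \<Rightarrow> real^'n^'n.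
     (\<forall>a\<in>{1..M}. \<forall>k<N.
        traj Qbar U a (Suc k) = traj Qbar U a k ** U k
      \<and> P a (Suc k) = P a k ** U k
      \<and> U k ** Lam - Lam ** transpose (U k) =
          (\<Sum>b\<in>{1..M}. transpose (traj Qbar U b k) ** P b k - transpose (P b k) ** traj Qbar U b k))
   \<and> (\<forall>a\<in>{1..M}. P a N = grad_mat phi (traj Qbar U a N))"
proof -
  define R where "R k = rprod U k (N - k)" for k
  define G where "G a = grad_mat phi (traj Qbar U a N)" for a
  define P where "P a k = G a ** transpose (R k)" for a k
  have orthU: "transpose (U k) ** U k = mat 1" if "k < N" for k
    using U_SO that by (simp add: rotation_matrix_def orthogonal_matrix_def)
  have R_suc: "R k = U k ** R (Suc k)" if "k < N" for k
  proof -
    have "N - k = Suc (N - Suc k)" using that by simp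
    then show ?thesis by (simp add: R_def)
  qed
  have RN: "R N = mat 1" by (simp add: R_def)
  have P_suc: "P a (Suc k) = P a k ** U k" if "k < N" for a k
    using that by (simp add: P_def R_suc matrix_transpose_mul matrix_mul_assoc[symmetric] orthU)
  have PN: "P a N = G a" for a by (simp add: P_def RN)
  have diff: "phi differentiable (at A)" for A
    using phi_smooth unfolding smooth_fun_def by (metis iter_pderiv.simps(1) lists.Nil)
  have trajN: "traj Qbar U a N = traj Qbar U a k ** R k" if "k \<le> N" for a k
    using traj_add[of Qbar U a k "N - k"] that by (simp add: R_def)
  define B where "B k = U k ** Lam + (\<Sum>b\<in>{1..M}. transpose (P b k) ** traj Qbar U b k)" for k
  have sym: "B k $ i $ j = B k $ j $ i" if kN: "k < N" and ij: "i \<noteq> j" for k i j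
  proof -
    obtain e where e: "e > 0" and mn: "\<And>V. (\<forall>k<N. rotation_matrix (V k) \<and> norm (V k - U k) < e)
                   \<Longrightarrow> cost N M Lam Qbar phi U \<le> cost N M Lam Qbar phi V"
      using locmin by blast
    define D where "D = E i i + E j j"
    define X where "X = E j i - E i j"
    have Gm_eq: "Gm i j t = mat 1 + (cos t - 1) *\<^sub>R D + sin t *\<^sub>R X" for t
      by (simp add: Gm_def D_def X_def)
    have Gexp: "Gm i j t ** A = A + (cos t - 1) *\<^sub>R (D ** A) + sin t *\<^sub>R (X ** A)" for t A
      by (simp add: Gm_eq mm_add_r mm_scale_l)
    define V where "V t = U(k := Gm i j t ** U k)" for t
    have traj_V: "traj Qbar (V t) a N = traj Qbar U a k ** (Gm i j t ** R k)" for t a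
    proof -
      have "traj Qbar (V t) a N = traj Qbar (V t) a (k + (N - k))" using kN by simp
      also have "\<dots> = traj Qbar (V t) a k ** rprod (V t) k (N - k)" by (rule traj_add)
      also have "traj Qbar (V t) a k = traj Qbar U a k"
        by (rule traj_cong) (simp add: V_def)
      also have "N - k = Suc (N - Suc k)" using kN by simp
      also have "rprod (V t) k (Suc (N - Suc k)) = (Gm i j t ** U k) ** rprod U (Suc k) (N - Suc k)"
        using rprod_cong[of "Suc k" "V t" U "N - Suc k"] by (simp add: V_def)
      also have "\<dots> = Gm i j t ** R k"
        using R_suc[OF kN] by (simp add: R_def matrix_mul_assoc)
      finally show ?thesis .
    qed
    let ?Q = "\<lambda>a. traj Qbar U a k"
    define F where "F t = (\<Sum>j<N. trace (Lam ** U j)) + ((cos t - 1) * trace (Lam ** (D ** U k)) + sin t * trace (Lam ** (X ** U k)))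
       + (\<Sum>a\<in>{1..M}. phi (?Q a ** R k + (cos t - 1) *\<^sub>R (?Q a ** (D ** R k)) + sin t *\<^sub>R (?Q a ** (X ** R k))))" for t
    have costV: "cost N M Lam Qbar phi (V t) = F t" for t
    proof -
      have "(\<Sum>j<N. trace (Lam ** V t j)) = (\<Sum>j<N. trace (Lam ** U j)) + (trace (Lam ** (Gm i j t ** U k)) - trace (Lam ** U k))"
        unfolding V_def by (rule trace_cong_sum[OF kN])
      moreover have "trace (Lam ** (Gm i j t ** U k)) - trace (Lam ** U k) = (cos t - 1) * trace (Lam ** (D ** U k)) + sin t * trace (Lam ** (X ** U k))"
        by (simp add: Gexp matrix_add_ldistrib mm_scale_r trace_add trace_scale)
      moreover have "traj Qbar (V t) a N = ?Q a ** R k + (cos t - 1) *\<^sub>R (?Q a ** (D ** R k)) + sin t *\<^sub>R (?Q a ** (X ** R k))" for a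
        by (simp add: traj_V Gexp matrix_add_ldistrib mm_scale_r)
      ultimately show ?thesis by (simp add: cost_def F_def)
    qed
    have V0: "V 0 = U" by (simp add: V_def Gm_0)
    have F0: "F 0 = cost N M Lam Qbar phi U" using costV[of 0] V0 by simp
    have der_a: "((\<lambda>t. phi (?Q a ** R k + (cos t - 1) *\<^sub>R (?Q a ** (D ** R k)) + sin t *\<^sub>R (?Q a ** (X ** R k))))
        has_field_derivative frechet_derivative phi (at (traj Qbar U a N)) (?Q a ** (X ** R k))) (at 0)" for a
    proof -
      let ?g = "\<lambda>t. ?Q a ** R k + (cos t - 1) *\<^sub>R (?Q a ** (D ** R k)) + sin t *\<^sub>R (?Q a ** (X ** R k))"
      let ?L = "frechet_derivative phi (at (traj Qbar U a N))"
      have g: "(?g has_derivative (\<lambda>h. h *\<^sub>R (?Q a ** (X ** R k)))) (at 0)"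
        by (auto intro!: derivative_eq_intros)
      have g0: "?g 0 = traj Qbar U a N" using trajN[of k a] kN by simp
      have p: "(phi has_derivative ?L) (at (?g 0))"
        unfolding g0 using diff frechet_derivative_works by blast
      have lin: "linear ?L" using p has_derivative_linear by blast
      have "((\<lambda>t. phi (?g t)) has_derivative (\<lambda>h. ?L (h *\<^sub>R (?Q a ** (X ** R k))))) (at 0)"
        by (rule has_derivative_compose[OF g p])
      then show ?thesis
        unfolding has_field_derivative_def by (simp add: linear_scale[OF lin] mult.commute[where b = "?L (?Q a ** (X ** R k))"])
    qed
    have derF: "DERIV F 0 :> (0 + ((- sin 0 * trace (Lam ** (D ** U k))) + cos 0 * trace (Lam ** (X ** U k))))
       + (\<Sum>a\<in>{1..M}. frechet_derivative phi (at (traj Qbar U a N)) (?Q a ** (X ** R k)))"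
      unfolding F_def
      by (intro derivative_intros der_a) (auto intro!: derivative_eq_intros)
    have "\<forall>\<^sub>F t in at (0::real). norm (Gm i j t ** U k - U k) < e"
    proof -
      have "((\<lambda>t. Gm i j t ** U k) \<longlongrightarrow> U k) (at 0)"
        unfolding Gexp
        by (auto intro!: tendsto_eq_intros)
      then show ?thesis using e by (simp add: tendsto_iff dist_norm)
    qed
    then obtain d where d: "d > 0" and dd: "\<And>t. t \<noteq> 0 \<Longrightarrow> dist t 0 < d \<Longrightarrow> norm (Gm i j t ** U k - U k) < e"
      unfolding eventually_at by blast
    have "\<forall>y. \<bar>0 - y\<bar> < d \<longrightarrow> F 0 \<le> F y"
    proof (intro allI impI)
      fix y :: real assume y: "\<bar>0 - y\<bar> < d"
      have "cost N M Lam Qbar phi U \<le> cost N M Lam Qbar phi (V y)"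
      proof (rule mn, intro allI impI conjI)
        fix k' assume k': "k' < N"
        show "rotation_matrix (V y k')"
        proof (cases "k' = k")
          case True
          have "rotation_matrix (Gm i j y)" by (rule Gm_rot[OF ij])
          moreover have "rotation_matrix (U k)" using U_SO kN by blast
          ultimately show ?thesis using True
            by (simp add: V_def rotation_matrix_def orthogonal_matrix_mul det_mul)
        next
          case False then show ?thesis using U_SO k' by (simp add: V_def)
        qed
        show "norm (V y k' - U k') < e"
        proof (cases "k' = k")
          case True
          show ?thesis
          proof (cases "y = 0")
            case True then show ?thesis using e \<open>k' = k\<close> by (simp add: V_def Gm_0)
          next
            case False then show ?thesis using dd[of y] y \<open>k' = k\<close> by (simp add: V_def dist_norm)
          qed
        next
          case False then show ?thesis using e by (simp add: V_def)
        qed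
      qed
      then show "F 0 \<le> F y" using F0 costV by simp
    qed
    then have zero: "(0 + ((- sin 0 * trace (Lam ** (D ** U k))) + cos 0 * trace (Lam ** (X ** U k))))
       + (\<Sum>a\<in>{1..M}. frechet_derivative phi (at (traj Qbar U a N)) (?Q a ** (X ** R k))) = 0"
      using DERIV_local_min[OF derF d] by blast
    have t1: "trace (Lam ** (X ** U k)) = trace ((U k ** Lam) ** X)"
      by (metis matrix_mul_assoc trace_mul_sym)
    have t2: "frechet_derivative phi (at (traj Qbar U a N)) (?Q a ** (X ** R k)) = trace ((transpose (P a k) ** ?Q a) ** X)" for a
    proof -
      have "frechet_derivative phi (at (traj Qbar U a N)) (?Q a ** (X ** R k)) = trace (transpose (G a) ** (?Q a ** (X ** R k)))"
        unfolding G_def by (rule deriv_trace[OF diff])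
      also have "\<dots> = trace ((transpose (G a) ** ?Q a ** X) ** R k)"
        by (simp add: matrix_mul_assoc)
      also have "\<dots> = trace (R k ** (transpose (G a) ** ?Q a ** X))"
        by (rule trace_mul_sym)
      also have "\<dots> = trace ((transpose (P a k) ** ?Q a) ** X)"
        by (simp add: P_def matrix_transpose_mul matrix_mul_assoc)
      finally show ?thesis .
    qed
    have "trace (B k ** X) = 0"
      using zero unfolding B_def
      by (simp add: t1 t2 mm_add_r mm_sum_r trace_add trace_sum)
    then show ?thesis
      by (simp add: X_def mm_diff_l trace_sub trace_E)
  qed
  show ?thesis
  proof (intro exI[of _ P] conjI ballI allI impI)
    fix a k assume a: "a \<in> {1..M}" and k: "k < N"
    show "traj Qbar U a (Suc k) = traj Qbar U a k ** U k" by simp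
    show "P a (Suc k) = P a k ** U k" by (rule P_suc[OF k])
    have LamT: "transpose Lam = Lam"
      using Lam_diag unfolding vec_eq_iff transpose_def by simp metis
    have h1: "Lam ** transpose (U k) = transpose (U k ** Lam)"
      by (simp add: matrix_transpose_mul LamT)
    have h2: "transpose (traj Qbar U b k) ** P b k = transpose (transpose (P b k) ** traj Qbar U b k)" for b
      by (simp add: matrix_transpose_mul)
    show "U k ** Lam - Lam ** transpose (U k) =
          (\<Sum>b\<in>{1..M}. transpose (traj Qbar U b k) ** P b k - transpose (P b k) ** traj Qbar U b k)"
    proof (rule mat_eqI)
      fix p q
      have "B k $ p $ q = B k $ q $ p"
        using sym[OF k] by (cases "p = q") auto
      then show "(U k ** Lam - Lam ** transpose (U k)) $ p $ q =
          (\<Sum>b\<in>{1..M}. transpose (traj Qbar U b k) ** P b k - transpose (P b k) ** traj Qbar U b k) $ p $ q"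
        unfolding B_def h1 h2
        by (simp add: tr_nth sum_subtractf)
    qed
  next
    fix a assume "a \<in> {1..M}"
    show "P a N = grad_mat phi (traj Qbar U a N)" by (simp add: PN G_def)
  qed
qed

end
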